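(* Let $\mathcal{G}=\{G_n\}$ be a graph sequence and $p$ a prime. Then $\beta_{\mathbb{Q}}(\mathcal{G})\le\beta_{\mathbb{F}_p}(\mathcal{G})\le c(\mathcal{G})-1$.
   Context: A graph sequence is a sequence $\mathcal{G}=\{G_n\}$ of finite simple graphs with uniformly bounded vertex degrees and $|V(G_n)|\to\infty$. For graph sequences with $V(H_n)=V(G_n)$, $\mathcal{H}\prec\mathcal{G}$ means there is an integer $L>0$ with $d_{G_n}(x,y)\le L\,d_{H_n}(x,y)$ for all $n,x,y$ (shortest path metrics), and $\mathcal{G}\simeq\mathcal{H}$ means $\mathcal{H}\prec\mathcal{G}$ and $\mathcal{G}\prec\mathcal{H}$. $e(\mathcal{G})=\liminf_n |E(G_n)|/|V(G_n)|$, $c(\mathcal{G})=\inf_{\mathcal{H}\simeq\mathcal{G}}e(\mathcal{H})$. For a field $K$ and finite graph $G$, $\varepsilon_K(G)$ is the $K$-vector space spanned by oriented edges with $(x,y)=-(y,x)$; a cycle $(x_1,\dots,x_m,x_1)$ gives the vector $\sum_{i=1}^{m-1}(x_i,x_{i+1})+(x_m,x_1)$; $C^q_K(G)$ is the subspace spanned by vectors of cycles of length at most $q$. $s^q_K(\mathcal{G})=\liminf_n \frac{|E(G_n)|-\dim_K C^q_K(G_n)}{|V(G_n)|}-1$, $\beta_K(\mathcal{G})=\inf_q s^q_K(\mathcal{G})$. $\mathbb{F}_p$ is the field with $p$ elements. *)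

theory Defs
  imports "HOL-Analysis.Analysis" "HOL-Library.Extended_Nat" "HOL-Library.Function_Algebras" "HOL-Computational_Algebra.Primes"
begin

record 'a graph =
  verts :: "'a set"
  edges :: "'a set set"

definition simple_graph :: "'a graph \<Rightarrow> bool" where
  "simple_graph G \<longleftrightarrow> finite (verts G) \<and> (\<forall>e\<in>edges G. e \<subseteq> verts G \<and> card e = 2)"

definition degree :: "'a graph \<Rightarrow> 'a \<Rightarrow> nat" where
  "degree G v = card {e \<in> edges G. v \<in> e}"

definition graph_seq :: "(nat \<Rightarrow> 'a graph) \<Rightarrow> bool" where
  "graph_seq G \<longleftrightarrow> (\<forall>n. simple_graph (G n))
     \<and> (\<exists>D. \<forall>n. \<forall>v\<in>verts (G n). degree (G n) v \<le> D)
     \<and> filterlim (\<lambda>n. card (verts (G n))) at_top sequentially"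

definition adjrel :: "'a graph \<Rightarrow> ('a \<times> 'a) set" where
  "adjrel G = {(x, y). {x, y} \<in> edges G}"

text \<open>Shortest path metric (infinite if no path).\<close>
definition gdist :: "'a graph \<Rightarrow> 'a \<Rightarrow> 'a \<Rightarrow> enat" where
  "gdist G x y = (INF k \<in> {k. (x, y) \<in> adjrel G ^^ k}. enat k)"

definition prec :: "(nat \<Rightarrow> 'a graph) \<Rightarrow> (nat \<Rightarrow> 'a graph) \<Rightarrow> bool" where
  "prec H G \<longleftrightarrow> (\<forall>n. verts (H n) = verts (G n)) \<and>
     (\<exists>L::nat. L > 0 \<and> (\<forall>n x y. gdist (G n) x y \<le> enat L * gdist (H n) x y))"

definition qi_equiv :: "(nat \<Rightarrow> 'a graph) \<Rightarrow> (nat \<Rightarrow> 'a graph) \<Rightarrow> bool" where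
  "qi_equiv G H \<longleftrightarrow> prec H G \<and> prec G H"

definition e_const :: "(nat \<Rightarrow> 'a graph) \<Rightarrow> ereal" where
  "e_const G = Liminf sequentially
     (\<lambda>n. ereal (real (card (edges (G n))) / real (card (verts (G n)))))"

definition c_const :: "(nat \<Rightarrow> 'a graph) \<Rightarrow> ereal" where
  "c_const G = (INF H \<in> {H. graph_seq H \<and> qi_equiv G H}. e_const H)"

text \<open>The space \<open>\<epsilon>_K(G)\<close> is realised inside the functions \<open>'a \<times> 'a \<Rightarrow> K\<close>:
  the oriented edge (x,y) is the function taking 1 at (x,y) and -1 at (y,x),
  so that (x,y) = -(y,x) and distinct edges are linearly independent.\<close>
definition oedge :: "'a \<Rightarrow> 'a \<Rightarrow> ('a \<times> 'a \<Rightarrow> 'k::field)" where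
  "oedge x y = (\<lambda>(u, v). if (u, v) = (x, y) then 1 else if (u, v) = (y, x) then -1 else 0)"

text \<open>Cycle (x_1,...,x_m,x_1): distinct vertices, m \<ge> 3, consecutive ones adjacent; its length is m.\<close>
definition is_cycle :: "'a graph \<Rightarrow> 'a list \<Rightarrow> bool" where
  "is_cycle G xs \<longleftrightarrow> length xs \<ge> 3 \<and> distinct xs \<and>
     (\<forall>i < length xs. {xs ! i, xs ! ((i + 1) mod length xs)} \<in> edges G)"

definition cyc_vec :: "'a list \<Rightarrow> ('a \<times> 'a \<Rightarrow> 'k::field)" where
  "cyc_vec xs = (\<lambda>z. \<Sum>i < length xs. oedge (xs ! i) (xs ! ((i + 1) mod length xs)) z)"

definition cyc_dim :: "'k::field itself \<Rightarrow> 'a graph \<Rightarrow> nat \<Rightarrow> nat" where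
  "cyc_dim K G q = vector_space.dim (\<lambda>(c::'k) f z. c * f z)
     {(cyc_vec xs :: 'a \<times> 'a \<Rightarrow> 'k) | xs. is_cycle G xs \<and> length xs \<le> q}"

definition s_const :: "'k::field itself \<Rightarrow> nat \<Rightarrow> (nat \<Rightarrow> 'a graph) \<Rightarrow> ereal" where
  "s_const K q G = Liminf sequentially
     (\<lambda>n. ereal ((real (card (edges (G n))) - real (cyc_dim K (G n) q)) / real (card (verts (G n))))) - 1"

definition beta :: "'k::field itself \<Rightarrow> (nat \<Rightarrow> 'a graph) \<Rightarrow> ereal" where
  "beta K G = (INF q. s_const K q G)"

end

theory Submission
  imports Defs
begin


lemma fvs: "vector_space (\<lambda>(c::'k::field) (f::'b \<Rightarrow> 'k) z. c * f z)"
  by unfold_locales (auto simp: fun_eq_iff algebra_simps)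

interpretation fvs: vector_space "\<lambda>(c::'k::field) (f::'b \<Rightarrow> 'k) z. c * f z"
  by (rule fvs)

lemma fsum_apply: "(\<Sum>w\<in>t. f w) z = (\<Sum>w\<in>t. f w z)"
  by (induction t rule: infinite_finite_induct) auto

fun pv :: "'a list \<Rightarrow> ('a \<times> 'a \<Rightarrow> 'k::field)" where
  "pv (x # y # r) = oedge x y + pv (y # r)"
| "pv _ = 0"

fun walk :: "'a graph \<Rightarrow> 'a list \<Rightarrow> bool" where
  "walk G (x # y # r) = ({x, y} \<in> edges G \<and> walk G (y # r))"
| "walk G _ = True"

lemma pv_append: "pv (xs @ y # ys) = (pv (xs @ [y]) + pv (y # ys) :: _ \<Rightarrow> 'k::field)"
proof (induction xs)
  case Nil then show ?case by simp
next
  case (Cons a xs) then show ?case by (cases xs) (auto simp: add.assoc)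
qed

lemma walk_append: "walk G (xs @ y # ys) \<longleftrightarrow> walk G (xs @ [y]) \<and> walk G (y # ys)"
proof (induction xs)
  case Nil then show ?case by simp
next
  case (Cons a xs) then show ?case by (cases xs) auto
qed

lemma pv_snoc: "ws \<noteq> [] \<Longrightarrow> pv (ws @ [v]) = (pv ws + oedge (last ws) v :: _ \<Rightarrow> 'k::field)"
proof (induction ws rule: pv.induct)
  case (1 x y r) then show ?case by (auto simp: add.assoc)
qed auto

lemma walk_snoc: "ws \<noteq> [] \<Longrightarrow> walk G ws \<Longrightarrow> {last ws, v} \<in> edges G \<Longrightarrow> walk G (ws @ [v])"
proof (induction ws rule: walk.induct)
  case (1 G x y r) then show ?case by auto
qed auto

lemma pv_sum: "pv ps = (\<lambda>z. \<Sum>i < length ps - 1. (oedge (ps!i) (ps!Suc i) z :: 'k::field))"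
proof (induction ps rule: pv.induct)
  case (1 x y r)
  then show ?case by (simp add: fun_eq_iff sum.lessThan_Suc_shift del: sum.lessThan_Suc)
qed (simp_all add: fun_eq_iff)

lemma walk_nth: "walk G ps \<longleftrightarrow> (\<forall>i. Suc i < length ps \<longrightarrow> {ps!i, ps!Suc i} \<in> edges G)"
proof (induction ps rule: walk.induct)
  case (1 G x y r)
  have "(\<forall>i. Suc i < length (x#y#r) \<longrightarrow> {(x#y#r)!i, (x#y#r)!Suc i} \<in> edges G) \<longleftrightarrow>
        {x,y} \<in> edges G \<and> (\<forall>i. Suc i < length (y#r) \<longrightarrow> {(y#r)!i, (y#r)!Suc i} \<in> edges G)"
    (is "?L \<longleftrightarrow> ?R")
  proof
    assume L: ?L
    have "{x,y} \<in> edges G" using L[rule_format, of 0] by simp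
    moreover have "\<forall>i. Suc i < length (y#r) \<longrightarrow> {(y#r)!i, (y#r)!Suc i} \<in> edges G"
    proof (intro allI impI)
      fix i assume "Suc i < length (y#r)"
      then show "{(y#r)!i, (y#r)!Suc i} \<in> edges G" using L[rule_format, of "Suc i"] by simp
    qed
    ultimately show ?R by blast
  next
    assume R: ?R
    show ?L
    proof (intro allI impI)
      fix i assume "Suc i < length (x#y#r)"
      then show "{(x#y#r)!i, (x#y#r)!Suc i} \<in> edges G"
        using R by (cases i) auto
    qed
  qed
  then show ?case using 1 by simp
qed auto

lemma oedge_swap: "x \<noteq> y \<Longrightarrow> oedge y x = (- oedge x y :: _ \<Rightarrow> 'k::field)"
  by (auto simp: oedge_def fun_eq_iff)

lemma edge_neq: "simple_graph G \<Longrightarrow> {x, y} \<in> edges G \<Longrightarrow> x \<noteq> y"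
proof
  assume sg: "simple_graph G" and e: "{x, y} \<in> edges G" and xy: "x = y"
  have "card {x, y} = 2" using sg e unfolding simple_graph_def by blast
  then show False using xy by simp
qed

lemma pv_rev:
  assumes sg: "simple_graph G"
  shows "walk G ps \<Longrightarrow> pv (rev ps) = (- pv ps :: _ \<Rightarrow> 'k::field)"
proof (induction ps rule: pv.induct)
  case (1 x y r)
  have e: "{x, y} \<in> edges G" and wr: "walk G (y # r)" using "1.prems" by simp_all
  have "x \<noteq> y" using edge_neq[OF sg e] .
  have "pv (rev (x # y # r)) = (pv (rev r @ y # [x]) :: _ \<Rightarrow> 'k)" by simp
  also have "\<dots> = pv (rev r @ [y]) + pv [y, x]" by (rule pv_append)
  also have "\<dots> = - pv (y # r) + oedge y x" using "1.IH"[OF wr] by (simp add: fun_eq_iff)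
  also have "\<dots> = - pv (x # y # r)" using oedge_swap[OF \<open>x \<noteq> y\<close>] by (simp add: fun_eq_iff)
  finally show ?case .
qed auto

definition Cq :: "'a graph \<Rightarrow> nat \<Rightarrow> ('a \<times> 'a \<Rightarrow> 'k::field) set" where
  "Cq G q = {cyc_vec xs | xs. is_cycle G xs \<and> length xs \<le> q}"

lemma cyc_dim_Cq: "cyc_dim TYPE('k::field) G q = fvs.dim (Cq G q :: ('a \<times> 'a \<Rightarrow> 'k) set)"
  unfolding cyc_dim_def Cq_def by (rule refl)

lemma cycle_case:
  assumes w: "walk G ps" and ne: "ps \<noteq> []" and hl: "hd ps = last ps"
    and d: "distinct (butlast ps)" and l4: "length ps \<ge> 4" and lq: "length ps \<le> q + 1"
  shows "(pv ps :: _ \<Rightarrow> 'k::field) \<in> Cq G q"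
proof -
  define xs where "xs = butlast ps"
  define n where "n = length xs"
  have n3: "n \<ge> 3" using l4 by (simp add: n_def xs_def)
  have xne: "xs \<noteq> []" using n3 n_def by auto
  have ps: "ps = xs @ [xs ! 0]"
  proof -
    have e: "ps = xs @ [last ps]" using ne unfolding xs_def by simp
    have "last ps = hd ps" using hl by simp
    also have "\<dots> = hd xs" using xne by (subst e) simp
    also have "\<dots> = xs ! 0" using xne by (simp add: hd_conv_nth)
    finally show ?thesis using e by simp
  qed
  have lenps: "length ps = Suc n" using ps n_def by simp
  have idx: "ps ! i = xs ! i \<and> ps ! Suc i = xs ! ((i + 1) mod n)" if "i < n" for i
  proof -
    have "ps ! i = xs ! i" using that n_def by (subst ps) (simp add: nth_append)
    moreover have "ps ! Suc i = xs ! ((i + 1) mod n)"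
    proof (cases "Suc i < n")
      case True then show ?thesis using n_def by (subst ps) (simp add: nth_append)
    next
      case False
      then have "Suc i = n" using that by simp
      then show ?thesis using n_def by (subst ps) (simp add: nth_append)
    qed
    ultimately show ?thesis by simp
  qed
  have cyc: "is_cycle G xs"
    unfolding is_cycle_def
  proof (intro conjI allI impI)
    show "3 \<le> length xs" using n3 n_def by simp
    show "distinct xs" using d xs_def by simp
    fix i assume "i < length xs"
    then have "Suc i < length ps" "i < n" using lenps n_def by auto
    then show "{xs ! i, xs ! ((i + 1) mod length xs)} \<in> edges G"
      using w idx[of i] n_def by (auto simp: walk_nth)
  qed
  have eq: "pv ps = (cyc_vec xs :: _ \<Rightarrow> 'k)"
    unfolding pv_sum cyc_vec_def lenps
    by (rule ext, rule sum.cong) (auto simp: idx n_def)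
  have lq': "length xs \<le> q" using lq lenps n_def by simp
  show ?thesis unfolding Cq_def mem_Collect_eq by (rule exI[of _ xs]) (simp add: eq lq' cyc)
qed

lemma closed_walk_span:
  assumes sg: "simple_graph G"
  shows "walk G ps \<Longrightarrow> ps \<noteq> [] \<Longrightarrow> hd ps = last ps \<Longrightarrow> length ps \<le> q + 1 \<Longrightarrow>
    (pv ps :: _ \<Rightarrow> 'k::field) \<in> fvs.span (Cq G q)"
proof (induction "length ps" arbitrary: ps rule: less_induct)
  case less
  show ?case
  proof (cases "distinct (butlast ps)")
    case d: True
    show ?thesis
    proof (cases "length ps \<ge> 4")
      case True
      show ?thesis by (rule fvs.span_base[OF cycle_case[OF less.prems(1-3) d True less.prems(4)]])
    next
      case False
      moreover have "length ps > 0" using less.prems(2) by simp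
      ultimately have "length ps = 1 \<or> length ps = 2 \<or> length ps = 3" by linarith
      then show ?thesis
      proof (elim disjE)
        assume "length ps = 1"
        then obtain x where "ps = [x]" by (cases ps) auto
        then show ?thesis by (simp add: fvs.span_zero)
      next
        assume "length ps = 2"
        then obtain x y where "ps = [x, y]" by (cases ps; cases "tl ps") auto
        then show ?thesis using less.prems edge_neq[OF sg] by auto
      next
        assume "length ps = 3"
        then obtain x y z where ps: "ps = [x, y, z]"
          by (cases ps; cases "tl ps"; cases "tl (tl ps)") auto
        then have "z = x" "x \<noteq> y" using less.prems edge_neq[OF sg] by auto
        then have "pv ps = (0 :: _ \<Rightarrow> 'k)" using ps by (auto simp: fun_eq_iff oedge_def)
        then show ?thesis by (simp add: fvs.span_zero)
      qed
    qed
  next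
    case False
    then obtain a v b c where bl: "butlast ps = a @ [v] @ b @ [v] @ c"
      using not_distinct_decomp by blast
    define l where "l = last ps"
    have ps: "ps = a @ v # ((b @ v # (c @ [l])))"
    proof -
      have "ps = butlast ps @ [last ps]" using less.prems(2) by simp
      then show ?thesis using bl unfolding l_def by simp
    qed
    define P1 where "P1 = v # b @ [v]"
    define P2 where "P2 = a @ v # c @ [l]"
    have pvs: "pv ps = (pv P1 + pv P2 :: _ \<Rightarrow> 'k)"
    proof -
      have "pv ps = (pv (a @ [v]) + pv (v # (b @ v # (c @ [l]))) :: _ \<Rightarrow> 'k)"
        by (subst ps, rule pv_append)
      also have "pv (v # (b @ v # (c @ [l]))) = (pv ((v # b) @ v # (c @ [l])) :: _ \<Rightarrow> 'k)" by simp
      also have "\<dots> = pv ((v # b) @ [v]) + pv (v # (c @ [l]))" by (rule pv_append)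
      also have "pv P2 = (pv (a @ [v]) + pv (v # (c @ [l])) :: _ \<Rightarrow> 'k)"
        unfolding P2_def by (rule pv_append)
      ultimately show ?thesis unfolding P1_def by (simp add: fun_eq_iff)
    qed
    have w0: "walk G (a @ v # (b @ v # (c @ [l])))" using less.prems(1) ps by (simp only:)
    have wa: "walk G (a @ [v])" and wr: "walk G (v # (b @ v # (c @ [l])))"
      using w0 unfolding walk_append[of G a v "b @ v # (c @ [l])"] by simp_all
    have wr': "walk G ((v # b) @ v # (c @ [l]))" using wr by simp
    have wb: "walk G ((v # b) @ [v])" and wc: "walk G (v # (c @ [l]))"
      using wr' unfolding walk_append[of G "v # b" v "c @ [l]"] by simp_all
    have w1: "walk G P1" using wb P1_def by simp
    have w2: "walk G P2" unfolding P2_def walk_append[of G a v "c @ [l]"] using wa wc by simp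
    have len1: "length P1 < length ps" using ps P1_def by simp
    have len2: "length P2 < length ps" using ps P2_def by simp
    have s1: "pv P1 \<in> fvs.span (Cq G q :: (_ \<Rightarrow> 'k) set)"
    proof (rule less.hyps[OF len1 w1])
      show "P1 \<noteq> []" "hd P1 = last P1" using P1_def by simp_all
      show "length P1 \<le> q + 1" using less.prems(4) len1 by simp
    qed
    have s2: "pv P2 \<in> fvs.span (Cq G q :: (_ \<Rightarrow> 'k) set)"
    proof (rule less.hyps[OF len2 w2])
      have "hd P2 = hd ps" using ps P2_def by (cases a) simp_all
      moreover have "last P2 = last ps" using P2_def l_def by simp
      ultimately show "hd P2 = last P2" using less.prems(3) by simp
      show "P2 \<noteq> []" using P2_def by simp
      show "length P2 \<le> q + 1" using less.prems(4) len2 by simp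
    qed
    show ?thesis unfolding pvs by (rule fvs.span_add[OF s1 s2])
  qed
qed




lemma relpow_walk: "(x, y) \<in> adjrel G ^^ k \<Longrightarrow>
  \<exists>ps. walk G ps \<and> ps \<noteq> [] \<and> hd ps = x \<and> last ps = y \<and> length ps = k + 1"
proof (induction k arbitrary: x)
  case 0
  then have "x = y" by simp
  then show ?case by (intro exI[of _ "[x]"]) simp
next
  case (Suc k)
  from relpow_Suc_D2[OF Suc.prems] obtain z where xz: "(x, z) \<in> adjrel G"
    and zy: "(z, y) \<in> adjrel G ^^ k" by blast
  from Suc.IH[OF zy] obtain ps where ps: "walk G ps" "ps \<noteq> []" "hd ps = z" "last ps = y"
    "length ps = k + 1" by blast
  obtain t where ps': "ps = z # t" using ps(2,3) by (cases ps) auto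
  have "{x, z} \<in> edges G" using xz by (simp add: adjrel_def)
  then have "walk G (x # z # t)" using ps(1) ps' by simp
  then show ?case using ps ps' by (intro exI[of _ "x # z # t"]) auto
qed

lemma gdist_walk:
  assumes "gdist G x y \<le> enat m"
  shows "\<exists>ps. walk G ps \<and> ps \<noteq> [] \<and> hd ps = x \<and> last ps = y \<and> length ps \<le> m + 1"
proof -
  have "\<exists>k. (x, y) \<in> adjrel G ^^ k \<and> k \<le> m"
  proof (rule ccontr)
    assume nex: "\<not> (\<exists>k. (x, y) \<in> adjrel G ^^ k \<and> k \<le> m)"
    have "enat (Suc m) \<le> enat k" if "k \<in> {k. (x, y) \<in> adjrel G ^^ k}" for k
    proof -
      have "\<not> k \<le> m" using nex that by blast
      then show ?thesis by simp
    qed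
    then have "enat (Suc m) \<le> gdist G x y" unfolding gdist_def by (rule INF_greatest)
    with assms have "enat (Suc m) \<le> enat m" by (rule order_trans[rotated])
    then show False by simp
  qed
  then obtain k where k: "(x, y) \<in> adjrel G ^^ k" "k \<le> m" by blast
  obtain ps where "walk G ps" "ps \<noteq> []" "hd ps = x" "last ps = y" "length ps = k + 1"
    using relpow_walk[OF k(1)] by blast
  then show ?thesis using k(2) by (intro exI[of _ ps]) simp
qed

lemma edge_gdist: "{x, y} \<in> edges G \<Longrightarrow> gdist G x y \<le> 1"
proof -
  assume "{x, y} \<in> edges G"
  then have "(x, y) \<in> adjrel G ^^ 1" by (simp add: adjrel_def)
  then have "1 \<in> {k. (x, y) \<in> adjrel G ^^ k}" by simp
  then have "gdist G x y \<le> enat 1" unfolding gdist_def by (rule INF_lower2) simp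
  then show ?thesis by (simp add: one_enat_def)
qed

lemma walk_rev: "walk G ps \<Longrightarrow> walk G (rev ps)"
proof (induction ps rule: walk.induct)
  case (1 G x y r)
  then have e: "{y, x} \<in> edges G" and w: "walk G (rev (y # r))"
    by (simp_all add: insert_commute)
  have "walk G (rev (y # r) @ [x])"
    by (rule walk_snoc) (use w e in auto)
  then show ?case by simp
qed auto

definition epair :: "'a set \<Rightarrow> 'a \<times> 'a" where
  "epair e = (SOME p. e = {fst p, snd p})"

lemma epair:
  assumes sg: "simple_graph G" and e: "e \<in> edges G"
  shows "e = {fst (epair e), snd (epair e)}" "fst (epair e) \<noteq> snd (epair e)"
proof -
  have "card e = 2" using sg e unfolding simple_graph_def by blast
  then obtain a b where "e = {a, b}" by (auto simp: card_2_iff)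
  then have "e = {fst (a, b), snd (a, b)}" by simp
  then show *: "e = {fst (epair e), snd (epair e)}"
    unfolding epair_def by (rule someI)
  have "{fst (epair e), snd (epair e)} \<in> edges G" using e * by simp
  then show "fst (epair e) \<noteq> snd (epair e)" by (rule edge_neq[OF sg])
qed

lemma oedge_nz: "oedge a b z \<noteq> (0::'k::field) \<Longrightarrow> z = (a, b) \<or> z = (b, a)"
  by (cases z) (auto simp: oedge_def split: if_splits)

lemma oedge_self: "oedge a b (a, b) = (1::'k::field)"
  by (simp add: oedge_def)

lemma finite_edges: "simple_graph G \<Longrightarrow> finite (edges G)"
proof -
  assume sg: "simple_graph G"
  then have "edges G \<subseteq> Pow (verts G)" unfolding simple_graph_def by blast
  moreover have "finite (verts G)" using sg unfolding simple_graph_def by blast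
  ultimately show ?thesis by (meson finite_Pow_iff finite_subset)
qed

lemma finite_cycles: "simple_graph G \<Longrightarrow> finite {xs. is_cycle G xs \<and> length xs \<le> q}"
proof -
  assume sg: "simple_graph G"
  have "{xs. is_cycle G xs \<and> length xs \<le> q} \<subseteq> {xs. set xs \<subseteq> verts G \<and> length xs \<le> q}"
  proof safe
    fix xs x assume c: "is_cycle G xs" and x: "x \<in> set xs"
    then obtain i where i: "i < length xs" "x = xs ! i" by (auto simp: in_set_conv_nth)
    then have "{xs ! i, xs ! ((i + 1) mod length xs)} \<in> edges G" using c unfolding is_cycle_def by blast
    then show "x \<in> verts G" using sg i unfolding simple_graph_def by blast
  qed
  note sub = this
  have fv: "finite (verts G)" using sg unfolding simple_graph_def by blast
  show ?thesis by (rule finite_subset[OF sub finite_lists_length_le[OF fv]])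
qed

lemma finite_Cq: "simple_graph G \<Longrightarrow> finite (Cq G q :: ('a \<times> 'a \<Rightarrow> 'k::field) set)"
proof -
  assume sg: "simple_graph G"
  have "(Cq G q :: ('a \<times> 'a \<Rightarrow> 'k::field) set) = cyc_vec ` {xs. is_cycle G xs \<and> length xs \<le> q}" unfolding Cq_def by blast
  then show ?thesis using finite_cycles[OF sg, of q] by (simp add: finite_imageI)
qed




lemma epair_oedge_eq:
  assumes sg: "simple_graph G" and e1: "e1 \<in> edges G" and e2: "e2 \<in> edges G"
    and nz: "(oedge (fst (epair e2)) (snd (epair e2)) (epair e1) :: 'k::field) \<noteq> 0"
  shows "e1 = e2"
proof -
  have "epair e1 = (fst (epair e2), snd (epair e2)) \<or> epair e1 = (snd (epair e2), fst (epair e2))"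
    by (rule oedge_nz[OF nz])
  then have "{fst (epair e1), snd (epair e1)} = {fst (epair e2), snd (epair e2)}"
    by (auto simp: insert_commute)
  then show ?thesis using epair(1)[OF sg e1] epair(1)[OF sg e2] by simp
qed

lemma claimA:
  fixes T :: "('a \<times> 'a \<Rightarrow> 'k::field) set"
  assumes sgG: "simple_graph G" and sgH: "simple_graph H"
    and gp: "\<And>e. e \<in> edges H \<Longrightarrow> walk G (gp e) \<and> gp e \<noteq> [] \<and> hd (gp e) = fst (epair e)
       \<and> last (gp e) = snd (epair e) \<and> length (gp e) \<le> L + 1 \<and> pv (gp e) \<in> T"
  shows "walk H ps \<Longrightarrow> ps \<noteq> [] \<Longrightarrow> \<exists>W. walk G W \<and> W \<noteq> [] \<and> hd W = hd ps \<and> last W = last ps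
     \<and> length W \<le> L * (length ps - 1) + 1 \<and> (pv W :: _ \<Rightarrow> 'k) \<in> fvs.span T"
proof (induction ps rule: pv.induct)
  case (1 x y r)
  have e: "{x, y} \<in> edges H" and wr: "walk H (y # r)" using "1.prems"(1) by simp_all
  obtain W' where W': "walk G W'" "W' \<noteq> []" "hd W' = y" "last W' = last (y # r)"
    "length W' \<le> L * (length (y # r) - 1) + 1" "(pv W' :: _ \<Rightarrow> 'k) \<in> fvs.span T"
  proof -
    have "\<exists>W. walk G W \<and> W \<noteq> [] \<and> hd W = hd (y # r) \<and> last W = last (y # r)
     \<and> length W \<le> L * (length (y # r) - 1) + 1 \<and> (pv W :: _ \<Rightarrow> 'k) \<in> fvs.span T"
      by (rule "1.IH"[OF wr]) simp
    then show ?thesis using that by auto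
  qed
  define a where "a = fst (epair {x, y})"
  define b where "b = snd (epair {x, y})"
  have ab: "{x, y} = {a, b}" unfolding a_def b_def by (rule epair(1)[OF sgH e])
  have abne: "a \<noteq> b" unfolding a_def b_def by (rule epair(2)[OF sgH e])
  have g: "walk G (gp {x, y})" "gp {x, y} \<noteq> []" "hd (gp {x, y}) = a" "last (gp {x, y}) = b"
    "length (gp {x, y}) \<le> L + 1" "pv (gp {x, y}) \<in> T"
    using gp[OF e] unfolding a_def b_def by auto
  obtain P where P: "walk G P" "P \<noteq> []" "hd P = x" "last P = y" "length P \<le> L + 1"
    "(pv P :: _ \<Rightarrow> 'k) \<in> fvs.span T"
  proof (cases "a = x")
    case True
    then have "b = y" using ab abne by (auto simp: doubleton_eq_iff)
    then show ?thesis using g True by (intro that[of "gp {x, y}"]) (simp_all add: fvs.span_base)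
  next
    case False
    then have ay: "a = y" and bx: "b = x" using ab by (auto simp: doubleton_eq_iff)
    have "pv (rev (gp {x, y})) = (- pv (gp {x, y}) :: _ \<Rightarrow> 'k)" by (rule pv_rev[OF sgG g(1)])
    moreover have "(- pv (gp {x, y}) :: _ \<Rightarrow> 'k) \<in> fvs.span T"
      by (rule fvs.span_neg[OF fvs.span_base[OF g(6)]])
    ultimately have "(pv (rev (gp {x, y})) :: _ \<Rightarrow> 'k) \<in> fvs.span T" by simp
    then show ?thesis
      using g ay bx walk_rev[OF g(1)]
      by (intro that[of "rev (gp {x, y})"]) (simp_all add: hd_rev last_rev)
  qed
  obtain t where W'eq: "W' = y # t" using W'(2,3) by (cases W') auto
  have "P = butlast P @ [y]" using append_butlast_last_id[OF P(2)] P(4) by simp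
  then obtain P0 where Peq: "P = P0 @ [y]" by blast
  have wW: "walk G (P0 @ y # t)" unfolding walk_append[of G P0 y t] using P(1) W'(1) Peq W'eq by simp
  have pvW: "pv (P0 @ y # t) = (pv P + pv W' :: _ \<Rightarrow> 'k)" unfolding pv_append[of P0 y t] using Peq W'eq by simp
  have "(pv P + pv W' :: _ \<Rightarrow> 'k) \<in> fvs.span T" by (rule fvs.span_add[OF P(6) W'(6)])
  then have spW: "(pv (P0 @ y # t) :: _ \<Rightarrow> 'k) \<in> fvs.span T" using pvW by simp
  have hdW: "hd (P0 @ y # t) = x" using P(3) Peq by (cases P0) simp_all
  have lastW: "last (P0 @ y # t) = last (x # y # r)" using W'(4) W'eq by simp
  have "length (P0 @ y # t) = length P + length W' - 1" using Peq W'eq by simp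
  also have "\<dots> \<le> L * (length (x # y # r) - 1) + 1"
    using P(5) W'(5) by (simp add: algebra_simps)
  finally have lenW: "length (P0 @ y # t) \<le> L * (length (x # y # r) - 1) + 1" .
  show ?case using wW spW hdW lastW lenW by (intro exI[of _ "P0 @ y # t"]) simp
next
  case ("2_2" v)
  have "(pv [v] :: _ \<Rightarrow> 'k) \<in> fvs.span T" by (subst pv.simps) (rule fvs.span_zero)
  then show ?case by (intro exI[of _ "[v]"]) (simp add: zero_fun_def)
qed simp


lemma main_ineq:
  fixes G H :: "'a graph"
  assumes sgG: "simple_graph G" and sgH: "simple_graph H"
    and d1: "\<And>x y. gdist G x y \<le> enat L1 * gdist H x y"
    and d2: "\<And>x y. gdist H x y \<le> enat L2 * gdist G x y"
  shows "card (edges G) \<le> cyc_dim TYPE('k::field) G (L1 * L2 + 1) + card (edges H)"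
proof -
  define q where "q = L1 * L2 + 1"
  have gpex: "\<exists>ps. walk G ps \<and> ps \<noteq> [] \<and> hd ps = fst (epair e) \<and> last ps = snd (epair e)
      \<and> length ps \<le> L1 + 1" if e: "e \<in> edges H" for e
  proof -
    have ee: "{fst (epair e), snd (epair e)} \<in> edges H" using epair(1)[OF sgH e] e by simp
    have "gdist H (fst (epair e)) (snd (epair e)) \<le> 1" by (rule edge_gdist[OF ee])
    then have "enat L1 * gdist H (fst (epair e)) (snd (epair e)) \<le> enat L1 * 1"
      by (rule mult_left_mono) simp
    then have "gdist G (fst (epair e)) (snd (epair e)) \<le> enat L1"
      using d1[of "fst (epair e)" "snd (epair e)"] by simp
    then show ?thesis by (rule gdist_walk)
  qed
  define gp where "gp (e :: 'a set) = (SOME ps. walk G ps \<and> ps \<noteq> [] \<and> hd ps = fst (epair e)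
      \<and> last ps = snd (epair e) \<and> length ps \<le> L1 + 1)" for e
  define T where "T = (\<lambda>e. pv (gp e) :: _ \<Rightarrow> 'k) ` edges H"
  have gpT: "walk G (gp e) \<and> gp e \<noteq> [] \<and> hd (gp e) = fst (epair e)
       \<and> last (gp e) = snd (epair e) \<and> length (gp e) \<le> L1 + 1 \<and> pv (gp e) \<in> T"
    if e: "e \<in> edges H" for e
  proof -
    have "walk G (gp e) \<and> gp e \<noteq> [] \<and> hd (gp e) = fst (epair e)
       \<and> last (gp e) = snd (epair e) \<and> length (gp e) \<le> L1 + 1"
      unfolding gp_def by (rule someI_ex[OF gpex[OF e]])
    moreover have "pv (gp e) \<in> T" unfolding T_def using e by (rule imageI)
    ultimately show ?thesis by simp
  qed
  define ov where "ov (e :: 'a set) = (oedge (fst (epair e)) (snd (epair e)) :: _ \<Rightarrow> 'k)" for e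
  define C where "C = (Cq G q :: (_ \<Rightarrow> 'k) set)"
  have inspan: "ov e \<in> fvs.span (C \<union> T)" if e: "e \<in> edges G" for e
  proof -
    define x where "x = fst (epair e)"
    define y where "y = snd (epair e)"
    have exy: "e = {x, y}" unfolding x_def y_def by (rule epair(1)[OF sgG e])
    have xy: "x \<noteq> y" unfolding x_def y_def by (rule epair(2)[OF sgG e])
    have ee: "{x, y} \<in> edges G" using e exy by simp
    have "gdist G x y \<le> 1" by (rule edge_gdist[OF ee])
    then have "enat L2 * gdist G x y \<le> enat L2 * 1" by (rule mult_left_mono) simp
    then have "gdist H x y \<le> enat L2" using d2[of x y] by simp
    then have "\<exists>ps. walk H ps \<and> ps \<noteq> [] \<and> hd ps = x \<and> last ps = y \<and> length ps \<le> L2 + 1"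
      by (rule gdist_walk)
    then obtain ps where ps: "walk H ps" "ps \<noteq> []" "hd ps = x" "last ps = y" "length ps \<le> L2 + 1"
      by blast
    have "\<exists>W. walk G W \<and> W \<noteq> [] \<and> hd W = hd ps \<and> last W = last ps
     \<and> length W \<le> L1 * (length ps - 1) + 1 \<and> (pv W :: _ \<Rightarrow> 'k) \<in> fvs.span T"
      by (rule claimA[OF sgG sgH gpT ps(1,2)])
    then obtain W where W: "walk G W" "W \<noteq> []" "hd W = hd ps" "last W = last ps"
      "length W \<le> L1 * (length ps - 1) + 1" "(pv W :: _ \<Rightarrow> 'k) \<in> fvs.span T"
      by blast
    have Wx: "hd W = x" and Wy: "last W = y" using W(3,4) ps(3,4) by simp_all
    have "L1 * (length ps - 1) \<le> L1 * L2" using ps(5) by (intro mult_le_mono2) simp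
    then have lenW: "length W \<le> L1 * L2 + 1" using W(5) by linarith
    have e2: "{last W, x} \<in> edges G" using ee Wy by (simp add: insert_commute)
    have w2: "walk G (W @ [x])" by (rule walk_snoc[OF W(2,1) e2])
    have s2: "(pv (W @ [x]) :: _ \<Rightarrow> 'k) \<in> fvs.span C"
      unfolding C_def
      by (rule closed_walk_span[OF sgG w2]) (use W(2) Wx lenW q_def in simp_all)
    have "pv (W @ [x]) = (pv W + oedge y x :: _ \<Rightarrow> 'k)" using pv_snoc[OF W(2)] Wy by simp
    also have "oedge y x = (- oedge x y :: _ \<Rightarrow> 'k)" by (rule oedge_swap[OF xy])
    finally have "ov e = pv W - (pv (W @ [x]) :: _ \<Rightarrow> 'k)" unfolding ov_def x_def[symmetric] y_def[symmetric]
      by (simp add: fun_eq_iff)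
    moreover have "pv W \<in> fvs.span (C \<union> T)" using W(6) fvs.span_mono[of T "C \<union> T"] by blast
    moreover have "pv (W @ [x]) \<in> fvs.span (C \<union> T)" using s2 fvs.span_mono[of C "C \<union> T"] by blast
    ultimately show ?thesis using fvs.span_diff by simp
  qed
  have finC: "finite C" unfolding C_def by (rule finite_Cq[OF sgG])
  have finT: "finite T" unfolding T_def by (rule finite_imageI[OF finite_edges[OF sgH]])
  obtain B where B: "B \<subseteq> C" "fvs.independent B" "C \<subseteq> fvs.span B" "card B = fvs.dim C"
    by (rule fvs.basis_exists)
  have finB: "finite B" by (rule finite_subset[OF B(1) finC])
  have CT: "C \<union> T \<subseteq> fvs.span (B \<union> T)"
  proof
    fix v assume "v \<in> C \<union> T"
    then show "v \<in> fvs.span (B \<union> T)"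
    proof
      assume "v \<in> C"
      then have "v \<in> fvs.span B" using B(3) by blast
      then show ?thesis using fvs.span_mono[of B "B \<union> T"] by blast
    next
      assume "v \<in> T"
      then show ?thesis by (intro fvs.span_base) simp
    qed
  qed
  have "fvs.span (C \<union> T) \<subseteq> fvs.span (B \<union> T)"
    by (rule fvs.span_minimal[OF CT fvs.subspace_span])
  then have sub: "ov ` edges G \<subseteq> fvs.span (B \<union> T)" using inspan by blast
  have inj: "inj_on ov (edges G)"
  proof
    fix e1 e2 assume e1: "e1 \<in> edges G" and e2: "e2 \<in> edges G" and eq: "ov e1 = ov e2"
    have "ov e1 (epair e1) = 1" unfolding ov_def using oedge_self[of "fst (epair e1)" "snd (epair e1)"] by simp
    then have "ov e2 (epair e1) = 1" using eq by simp
    then have "(oedge (fst (epair e2)) (snd (epair e2)) (epair e1) :: 'k) \<noteq> 0"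
      unfolding ov_def by simp
    then show "e1 = e2" by (rule epair_oedge_eq[OF sgG e1 e2])
  qed
  have indep: "fvs.independent (ov ` edges G)"
    unfolding fvs.independent_explicit_finite_subsets
  proof (intro allI impI ballI)
    fix S u v
    assume S: "S \<subseteq> ov ` edges G" and finS: "finite S"
      and sum0: "(\<Sum>v\<in>S. (\<lambda>z. u v * v z)) = 0" and v: "v \<in> S"
    obtain e where e: "e \<in> edges G" and ve: "v = ov e" using S v by blast
    have others: "w (epair e) = 0" if w: "w \<in> S - {v}" for w
    proof (rule ccontr)
      assume nz: "w (epair e) \<noteq> 0"
      obtain e' where e': "e' \<in> edges G" and we: "w = ov e'" using S w by blast
      have "(oedge (fst (epair e')) (snd (epair e')) (epair e) :: 'k) \<noteq> 0"
        using nz we unfolding ov_def by simp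
      then have "e = e'" by (rule epair_oedge_eq[OF sgG e e'])
      then show False using w ve we by simp
    qed
    have "0 = (\<Sum>w\<in>S. (\<lambda>z. u w * w z)) (epair e)" using sum0 by simp
    also have "\<dots> = (\<Sum>w\<in>S. u w * w (epair e))" by (rule fsum_apply)
    also have "\<dots> = u v * v (epair e) + (\<Sum>w\<in>S - {v}. u w * w (epair e))"
      by (rule sum.remove[OF finS v])
    also have "(\<Sum>w\<in>S - {v}. u w * w (epair e)) = 0"
      by (rule sum.neutral) (simp add: others)
    also have "v (epair e) = 1" unfolding ve ov_def using oedge_self[of "fst (epair e)" "snd (epair e)"] by simp
    finally show "u v = 0" by simp
  qed
  have "card (ov ` edges G) \<le> card (B \<union> T)"
    using fvs.independent_span_bound[OF _ indep sub] finB finT by simp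
  also have "\<dots> \<le> card B + card T" by (rule card_Un_le)
  also have "card T \<le> card (edges H)" unfolding T_def by (rule card_image_le[OF finite_edges[OF sgH]])
  finally have "card (ov ` edges G) \<le> fvs.dim C + card (edges H)" using B(4) by simp
  moreover have "card (ov ` edges G) = card (edges G)" by (rule card_image[OF inj])
  moreover have "cyc_dim TYPE('k) G (L1 * L2 + 1) = fvs.dim C"
    unfolding C_def q_def by (rule cyc_dim_Cq)
  ultimately show ?thesis by simp
qed




lemma ereal_aux:
  assumes "\<And>H. H \<in> A \<Longrightarrow> (b::ereal) \<le> f H - 1"
  shows "b \<le> (INF H\<in>A. f H) - 1"
proof -
  have one: "\<bar>1::ereal\<bar> \<noteq> \<infinity>" by simp
  have "b + 1 \<le> (INF H\<in>A. f H)"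
  proof (rule INF_greatest)
    fix H assume "H \<in> A"
    then have "b \<le> f H - 1" by (rule assms)
    then show "b + 1 \<le> f H" using ereal_le_minus[OF one] by simp
  qed
  then show ?thesis using ereal_le_minus[OF one] by simp
qed

lemma ereal_minus1_mono: "(a::ereal) \<le> b \<Longrightarrow> a - 1 \<le> b - 1"
  by (metis order_refl ereal_minus_mono)

definition oi :: "'a \<Rightarrow> 'a \<Rightarrow> ('a \<times> 'a \<Rightarrow> int)" where
  "oi x y = (\<lambda>(u, v). if (u, v) = (x, y) then 1 else if (u, v) = (y, x) then -1 else 0)"

definition cvi :: "'a list \<Rightarrow> ('a \<times> 'a \<Rightarrow> int)" where
  "cvi xs = (\<lambda>z. \<Sum>i < length xs. oi (xs ! i) (xs ! ((i + 1) mod length xs)) z)"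

lemma oedge_int: "oedge x y z = (of_int (oi x y z) :: 'k::field)"
  by (cases z) (simp add: oedge_def oi_def)

lemma cyc_vec_int: "cyc_vec xs = (\<lambda>z. (of_int (cvi xs z) :: 'k::field))"
  unfolding cyc_vec_def cvi_def by (simp add: oedge_int)

lemma cyc_dim_int:
  "cyc_dim TYPE('k::field) G q =
     fvs.dim ((\<lambda>v z. (of_int (v z) :: 'k)) ` {cvi xs | xs. is_cycle G xs \<and> length xs \<le> q})"
proof -
  have "{(cyc_vec xs :: _ \<Rightarrow> 'k) | xs. is_cycle G xs \<and> length xs \<le> q} =
     (\<lambda>v z. (of_int (v z) :: 'k)) ` {cvi xs | xs. is_cycle G xs \<and> length xs \<le> q}"
    by (auto simp: cyc_vec_int)
  then show ?thesis unfolding cyc_dim_def by simp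
qed

lemma descent:
  fixes c :: "'v \<Rightarrow> int" and f :: "'v \<Rightarrow> 'z \<Rightarrow> int" and r :: int
  assumes r: "r > 1" and fin: "finite t"
  shows "(\<forall>z. (\<Sum>w\<in>t. c w * f w z) = 0) \<Longrightarrow> w0 \<in> t \<Longrightarrow> c w0 \<noteq> 0 \<Longrightarrow>
    \<exists>c'. (\<forall>z. (\<Sum>w\<in>t. c' w * f w z) = 0) \<and> (\<exists>w\<in>t. \<not> r dvd c' w)"
proof (induction "nat (\<Sum>w\<in>t. \<bar>c w\<bar>)" arbitrary: c w0 rule: less_induct)
  case less
  show ?case
  proof (cases "\<exists>w\<in>t. \<not> r dvd c w")
    case True
    then show ?thesis using less.prems(1) by blast
  next
    case False
    define c' where "c' w = c w div r" for w
    have cc: "c w = r * c' w" if "w \<in> t" for w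
      using False that unfolding c'_def by simp
    have z: "\<forall>z. (\<Sum>w\<in>t. c' w * f w z) = 0"
    proof
      fix z
      have "r * (\<Sum>w\<in>t. c' w * f w z) = (\<Sum>w\<in>t. c w * f w z)"
        by (simp add: sum_distrib_left cc mult.assoc)
      also have "\<dots> = 0" using less.prems(1) by blast
      finally show "(\<Sum>w\<in>t. c' w * f w z) = 0" using r by simp
    qed
    have nz: "c' w0 \<noteq> 0" using cc[OF less.prems(2)] less.prems(3) by auto
    have absle: "\<bar>c' w\<bar> \<le> \<bar>c w\<bar>" if "w \<in> t" for w
    proof -
      have "\<bar>c w\<bar> = r * \<bar>c' w\<bar>" using cc[OF that] r by (simp add: abs_mult)
      then show ?thesis using r by (simp add: mult_le_cancel_right1 abs_ge_zero)
    qed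
    have abslt: "\<bar>c' w0\<bar> < \<bar>c w0\<bar>"
    proof -
      have "\<bar>c w0\<bar> = r * \<bar>c' w0\<bar>" using cc[OF less.prems(2)] r by (simp add: abs_mult)
      moreover have "\<bar>c' w0\<bar> > 0" using nz by simp
      ultimately show ?thesis using r by simp
    qed
    have lt: "(\<Sum>w\<in>t. \<bar>c' w\<bar>) < (\<Sum>w\<in>t. \<bar>c w\<bar>)"
      by (rule sum_strict_mono_ex1[OF fin]) (use absle abslt less.prems(2) in auto)
    have ge: "0 \<le> (\<Sum>w\<in>t. \<bar>c' w\<bar>)" by (simp add: sum_nonneg)
    have "nat (\<Sum>w\<in>t. \<bar>c' w\<bar>) < nat (\<Sum>w\<in>t. \<bar>c w\<bar>)"
      using lt ge by linarith
    then show ?thesis using less.hyps z less.prems(2) nz by blast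
  qed
qed

lemma common_denom:
  fixes g :: "'v \<Rightarrow> rat"
  assumes "finite A"
  shows "\<exists>D::int. D > 0 \<and> (\<forall>x\<in>A. \<exists>a::int. g x * of_int D = of_int a)"
  using assms
proof (induction A rule: finite_induct)
  case empty
  show ?case by (intro exI[of _ 1]) simp
next
  case (insert x A)
  then obtain D where D: "D > 0" "\<forall>y\<in>A. \<exists>a::int. g y * of_int D = of_int a" by blast
  obtain a0 b where q: "quotient_of (g x) = (a0, b)" by (cases "quotient_of (g x)")
  have b: "b > 0" using quotient_of_denom_pos[OF q] .
  have gx: "g x = of_int a0 / of_int b" using quotient_of_div[OF q] .
  have "\<forall>y\<in>insert x A. \<exists>a::int. g y * of_int (D * b) = of_int a"
  proof
    fix y assume "y \<in> insert x A"
    then show "\<exists>a::int. g y * of_int (D * b) = of_int a"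
    proof
      assume "y = x"
      then have "g y * of_int (D * b) = of_int (a0 * D)" using gx b by (simp add: field_simps)
      then show ?thesis by blast
    next
      assume "y \<in> A"
      then obtain a where "g y * of_int D = of_int a" using D(2) by blast
      then have "g y * of_int (D * b) = of_int (a * b)" by (simp add: mult.assoc[symmetric])
      then show ?thesis by blast
    qed
  qed
  then show ?case using D(1) b by (intro exI[of _ "D * b"]) simp
qed


lemma card_indep_le_dim:
  fixes V B :: "('b \<Rightarrow> 'k::field) set"
  assumes finV: "finite V" and BV: "B \<subseteq> V" and ind: "fvs.independent B"
  shows "card B \<le> fvs.dim V"
proof -
  obtain Bv where Bv: "Bv \<subseteq> V" "fvs.independent Bv" "V \<subseteq> fvs.span Bv" "card Bv = fvs.dim V"
    by (rule fvs.basis_exists)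
  have "finite Bv" by (rule finite_subset[OF Bv(1) finV])
  moreover have "B \<subseteq> fvs.span Bv" using BV Bv(3) by blast
  ultimately have "card B \<le> card Bv" using fvs.independent_span_bound ind by blast
  then show ?thesis using Bv(4) by simp
qed

lemma rank_le:
  fixes S :: "('b \<Rightarrow> int) set"
  assumes fin: "finite S" and finK: "finite (UNIV :: 'k::field set)"
  shows "fvs.dim ((\<lambda>v z. (of_int (v z) :: 'k)) ` S) \<le> fvs.dim ((\<lambda>v z. (of_int (v z) :: rat)) ` S)"
proof -
  define Fk where "Fk = (\<lambda>(v :: 'b \<Rightarrow> int) z. (of_int (v z) :: 'k))"
  define FQ where "FQ = (\<lambda>(v :: 'b \<Rightarrow> int) z. (of_int (v z) :: rat))"
  obtain Bk where Bk: "Bk \<subseteq> Fk ` S" "fvs.independent Bk" "Fk ` S \<subseteq> fvs.span Bk"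
    "card Bk = fvs.dim (Fk ` S)"
    by (rule fvs.basis_exists)
  obtain B where B: "B \<subseteq> S" "inj_on Fk B" "Bk = Fk ` B"
    using Bk(1) unfolding subset_image_inj by blast
  have injQ: "inj FQ"
  proof
    fix v w assume "FQ v = FQ w"
    then have "\<And>z. (of_int (v z) :: rat) = of_int (w z)" unfolding FQ_def by meson
    then show "v = w" by (simp add: fun_eq_iff)
  qed
  define r where "r = int CHAR('k)"
  have r: "r > 1"
  proof -
    have "CHAR('k) > 0" by (rule finite_imp_CHAR_pos[OF finK])
    moreover have "CHAR('k) \<noteq> 1" using CHAR_not_1[where 'a='k] by simp
    ultimately have "CHAR('k) \<ge> 2" by linarith
    then show ?thesis unfolding r_def by simp
  qed
  have indQ: "fvs.independent (FQ ` B)"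
  proof
    assume "fvs.dependent (FQ ` B)"
    then obtain t u where t: "finite t" "t \<subseteq> FQ ` B" and sum0: "(\<Sum>v\<in>t. (\<lambda>z. u v * v z)) = 0"
      and v0: "\<exists>v\<in>t. u v \<noteq> 0"
      unfolding fvs.dependent_explicit by blast
    obtain t' where t': "t' \<subseteq> B" "t = FQ ` t'"
      using t(2) unfolding subset_image_inj by blast
    have injt': "inj_on FQ t'" by (rule inj_on_subset[OF injQ subset_UNIV])
    have fint': "finite t'" using t(1) t'(2) finite_image_iff[OF injt'] by simp
    define uq where "uq w = u (FQ w)" for w
    have sq: "(\<Sum>w\<in>t'. uq w * of_int (w z)) = 0" for z
    proof -
      have "(\<Sum>v\<in>t. (\<lambda>z. u v * v z)) z = 0" using sum0 by simp
      then have "(\<Sum>v\<in>t. u v * v z) = 0" by (simp add: fsum_apply)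
      then have "(\<Sum>v\<in>FQ ` t'. u v * v z) = 0" using t'(2) by simp
      then have "(\<Sum>w\<in>t'. u (FQ w) * FQ w z) = 0" using sum.reindex[OF injt', of "\<lambda>v. u v * v z"] by simp
      then show ?thesis unfolding uq_def FQ_def by simp
    qed
    obtain D :: int where D: "D > 0" "\<forall>w\<in>t'. \<exists>a::int. uq w * of_int D = of_int a"
      using common_denom[OF fint', of uq] by blast
    define c where "c w = (SOME a::int. uq w * of_int D = of_int a)" for w
    have c: "of_int (c w) = uq w * of_int D" if "w \<in> t'" for w
      unfolding c_def using someI_ex[OF D(2)[rule_format, OF that]] by simp
    have csum: "\<forall>z. (\<Sum>w\<in>t'. c w * w z) = 0"
    proof
      fix z
      have "(of_int (\<Sum>w\<in>t'. c w * w z) :: rat) = (\<Sum>w\<in>t'. of_int (c w) * of_int (w z))"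
        by simp
      also have "\<dots> = (\<Sum>w\<in>t'. of_int D * (uq w * of_int (w z)))"
        by (rule sum.cong) (simp_all add: c)
      also have "\<dots> = of_int D * (\<Sum>w\<in>t'. uq w * of_int (w z))" by (simp add: sum_distrib_left)
      also have "\<dots> = 0" using sq by simp
      finally have "(of_int (\<Sum>w\<in>t'. c w * w z) :: rat) = 0" .
      then show "(\<Sum>w\<in>t'. c w * w z) = 0" by (simp only: of_int_eq_0_iff)
    qed
    obtain w0 where w0: "w0 \<in> t'" "uq w0 \<noteq> 0" using v0 t'(2) uq_def by auto
    have cw0: "c w0 \<noteq> 0"
    proof
      assume "c w0 = 0"
      then have "uq w0 * of_int D = 0" using c[OF w0(1)] by simp
      then show False using w0(2) D(1) by simp
    qed
    obtain c' where c': "\<forall>z. (\<Sum>w\<in>t'. c' w * w z) = 0" and w1: "\<exists>w\<in>t'. \<not> r dvd c' w"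
      using descent[where f="\<lambda>w. w", OF r fint' csum w0(1) cw0] by blast
    then obtain w1 where w1: "w1 \<in> t'" "\<not> r dvd c' w1" by blast
    have nzk: "(of_int (c' w1) :: 'k) \<noteq> 0"
      using w1(2) of_int_eq_0_iff_char_dvd[where 'a='k] unfolding r_def by simp
    have injk: "inj_on Fk t'" using B(2) t'(1) by (rule inj_on_subset)
    define uk where "uk v = (of_int (c' (inv_into t' Fk v)) :: 'k)" for v
    have subk: "Fk ` t' \<subseteq> Bk" using t'(1) B(3) by blast
    have fink: "finite (Fk ` t')" using fint' by simp
    have sumk: "(\<Sum>v\<in>Fk ` t'. (\<lambda>z. uk v * v z)) = 0"
    proof (rule ext)
      fix z
      have "(\<Sum>v\<in>Fk ` t'. (\<lambda>z. uk v * v z)) z = (\<Sum>v\<in>Fk ` t'. uk v * v z)" by (rule fsum_apply)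
      also have "\<dots> = (\<Sum>w\<in>t'. uk (Fk w) * Fk w z)" by (rule sum.reindex[OF injk, unfolded comp_def])
      also have "\<dots> = (\<Sum>w\<in>t'. of_int (c' w) * of_int (w z))"
      proof (rule sum.cong)
        fix w assume w: "w \<in> t'"
        show "uk (Fk w) * Fk w z = of_int (c' w) * of_int (w z)"
          unfolding uk_def inv_into_f_f[OF injk w] by (simp add: Fk_def)
      qed simp
      also have "\<dots> = of_int (\<Sum>w\<in>t'. c' w * w z)" by simp
      also have "\<dots> = 0" using c' by simp
      finally show "(\<Sum>v\<in>Fk ` t'. (\<lambda>z. uk v * v z)) z = 0 z" by simp
    qed
    have "\<forall>v\<in>Fk ` t'. uk v = 0"
      using Bk(2) subk fink sumk unfolding fvs.independent_explicit_finite_subsets by blast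
    then have "uk (Fk w1) = 0" using w1(1) by blast
    then show False using nzk unfolding uk_def inv_into_f_f[OF injk w1(1)] by simp
  qed
  have "fvs.dim (Fk ` S) = card Bk" using Bk(4) by simp
  also have "\<dots> = card B" unfolding B(3) by (rule card_image[OF B(2)])
  also have "\<dots> = card (FQ ` B)" by (rule card_image[OF inj_on_subset[OF injQ subset_UNIV], symmetric])
  also have "\<dots> \<le> fvs.dim (FQ ` S)"
    by (rule card_indep_le_dim[OF finite_imageI[OF fin] image_mono[OF B(1)] indQ])
  finally show ?thesis unfolding Fk_def FQ_def .
qed


theorem proposition3:
  fixes G :: "nat \<Rightarrow> 'a graph" and p :: nat
  assumes "graph_seq G" and "prime p" and "CARD('k::{finite,field}) = p"
  shows "beta TYPE(rat) G \<le> beta TYPE('k) G \<and> beta TYPE('k) G \<le> c_const G - 1"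
proof
  have sgG: "\<And>n. simple_graph (G n)" using assms(1) unfolding graph_seq_def by blast
  have finK: "finite (UNIV :: 'k set)" by simp
  show "beta TYPE(rat) G \<le> beta TYPE('k) G"
    unfolding beta_def
  proof (rule INF_mono)
    fix q :: nat
    have "s_const TYPE(rat) q G \<le> s_const TYPE('k) q G"
      unfolding s_const_def
    proof (rule ereal_minus1_mono, rule Liminf_mono, rule always_eventually, rule allI)
      fix n
      define S where "S = {cvi xs | xs. is_cycle (G n) xs \<and> length xs \<le> q}"
      have "S = cvi ` {xs. is_cycle (G n) xs \<and> length xs \<le> q}" unfolding S_def by blast
      then have finS: "finite S" using finite_cycles[OF sgG[of n], of q] by simp
      have "cyc_dim TYPE('k) (G n) q \<le> cyc_dim TYPE(rat) (G n) q"
        unfolding cyc_dim_int S_def[symmetric] by (rule rank_le[OF finS finK])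
      then have "real (card (edges (G n))) - real (cyc_dim TYPE(rat) (G n) q)
          \<le> real (card (edges (G n))) - real (cyc_dim TYPE('k) (G n) q)" by simp
      then show "ereal ((real (card (edges (G n))) - real (cyc_dim TYPE(rat) (G n) q)) / real (card (verts (G n))))
          \<le> ereal ((real (card (edges (G n))) - real (cyc_dim TYPE('k) (G n) q)) / real (card (verts (G n))))"
        by (simp add: divide_right_mono)
    qed
    then show "\<exists>q'\<in>UNIV. s_const TYPE(rat) q' G \<le> s_const TYPE('k) q G" by blast
  qed
  show "beta TYPE('k) G \<le> c_const G - 1"
    unfolding c_const_def
  proof (rule ereal_aux)
    fix H assume H: "H \<in> {H. graph_seq H \<and> qi_equiv G H}"
    then have gH: "graph_seq H" and pHG: "prec H G" and pGH: "prec G H"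
      unfolding qi_equiv_def by auto
    have sgH: "\<And>n. simple_graph (H n)" using gH unfolding graph_seq_def by blast
    obtain L1 where L1: "\<And>n x y. gdist (G n) x y \<le> enat L1 * gdist (H n) x y"
      using pHG unfolding prec_def by blast
    obtain L2 where L2: "\<And>n x y. gdist (H n) x y \<le> enat L2 * gdist (G n) x y"
      using pGH unfolding prec_def by blast
    have V: "\<And>n. verts (H n) = verts (G n)" using pHG unfolding prec_def by blast
    define q where "q = L1 * L2 + 1"
    have "s_const TYPE('k) q G \<le> e_const H - 1"
      unfolding s_const_def e_const_def
    proof (rule ereal_minus1_mono, rule Liminf_mono, rule always_eventually, rule allI)
      fix n
      have "card (edges (G n)) \<le> cyc_dim TYPE('k) (G n) q + card (edges (H n))"
        unfolding q_def by (rule main_ineq[OF sgG sgH L1[of n] L2[of n]])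
      then have "real (card (edges (G n))) \<le> real (cyc_dim TYPE('k) (G n) q) + real (card (edges (H n)))"
        by (simp only: of_nat_add[symmetric] of_nat_le_iff)
      then have "real (card (edges (G n))) - real (cyc_dim TYPE('k) (G n) q) \<le> real (card (edges (H n)))"
        by linarith
      then show "ereal ((real (card (edges (G n))) - real (cyc_dim TYPE('k) (G n) q)) / real (card (verts (G n))))
          \<le> ereal (real (card (edges (H n))) / real (card (verts (H n))))"
        using V[of n] by (simp add: divide_right_mono)
    qed
    moreover have "beta TYPE('k) G \<le> s_const TYPE('k) q G" unfolding beta_def by (rule INF_lower) simp
    ultimately show "beta TYPE('k) G \<le> e_const H - 1" by (rule order_trans[rotated])
  qed
qed


end
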